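(* Let $s>0$, $\beta>1$, $\gamma>0$ and let $\eta_N(z)=\eta_0\zeta(z/N)$, $z\in[0,N]$, be a fractional learning-rate schedule with power-decay tail of exponent $\gamma$ (constants $\delta\in(0,1)$ as in the definition). Let $\alpha=\min\{\beta,\gamma+1\}$ and $T_N=\eta_0N\int_0^1\zeta(x)dx$. Define $$\mathcal F[\eta_N]:=(1+T_N)^{-s}+\int_0^{T_N}\mathcal K(T_N-\tau)\varphi(\tau)\,d\tau,\qquad \mathcal K(u)=(1+u)^{-(2-1/\beta)},$$ where $\varphi(\tau)=\eta_N(z(\tau))$ is the learning rate in intrinsic time. Then for all $T_N\ge 2$, $$\mathcal F[\eta_N]\eqsim T_N^{-s}+\eta_0\,T_N^{-(1-\frac1\alpha)}\,(\log T_N)^{\mathbf 1\{\beta=\gamma+1\}},$$ with implicit constants depending only on $s,\beta,\zeta$ (not on $N$ or $\eta_0$).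
   Context: A fractional LRS with power-decay tail: $\eta_N(z)=\eta_0\zeta(z/N)$ with $\eta_0>0$ and a measurable profile $\zeta:[0,1]\to[0,1]$ with $\zeta(0)=1$, such that there exist $\gamma>0$, $\delta\in(0,1)$ with $\zeta(x)\eqsim(1-x)^\gamma$ for all $x\in[\delta,1]$. The intrinsic time is $t(z)=\int_0^z\eta_N(u)du$, so $T_N=t(N)$; $z(\cdot)$ denotes a generalized inverse of $t(\cdot)$ on $[0,T_N]$, and $\varphi(\tau):=\eta_N(z(\tau))$. $\mathbf 1\{\cdot\}$ is the indicator. $f\eqsim g$ means two-sided bounds up to positive multiplicative constants. *)

theory Defs
  imports "HOL-Analysis.Analysis"
begin

definition lrs_profile :: "(real \<Rightarrow> real) \<Rightarrow> bool" where
  "lrs_profile \<zeta> \<longleftrightarrow> set_borel_measurable lborel {0..1} \<zeta> \<and>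
     (\<forall>x\<in>{0..1}. 0 \<le> \<zeta> x \<and> \<zeta> x \<le> 1) \<and> \<zeta> 0 = 1"

definition power_decay_tail :: "(real \<Rightarrow> real) \<Rightarrow> real \<Rightarrow> real \<Rightarrow> bool" where
  "power_decay_tail \<zeta> \<gamma> \<delta> \<longleftrightarrow> 0 < \<delta> \<and> \<delta> < 1 \<and>
     (\<exists>c1 c2. 0 < c1 \<and> 0 < c2 \<and>
        (\<forall>x\<in>{\<delta>..1}. c1 * (1 - x) powr \<gamma> \<le> \<zeta> x \<and> \<zeta> x \<le> c2 * (1 - x) powr \<gamma>))"

definition lrs_eta :: "real \<Rightarrow> (real \<Rightarrow> real) \<Rightarrow> nat \<Rightarrow> real \<Rightarrow> real" where
  "lrs_eta \<eta>0 \<zeta> N z = \<eta>0 * \<zeta> (z / real N)"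

definition lrs_time :: "real \<Rightarrow> (real \<Rightarrow> real) \<Rightarrow> nat \<Rightarrow> real \<Rightarrow> real" where
  "lrs_time \<eta>0 \<zeta> N z = (LINT u:{0..z}|lborel. lrs_eta \<eta>0 \<zeta> N u)"

definition lrs_T :: "real \<Rightarrow> (real \<Rightarrow> real) \<Rightarrow> nat \<Rightarrow> real" where
  "lrs_T \<eta>0 \<zeta> N = lrs_time \<eta>0 \<zeta> N (real N)"

text \<open>Generalized (left-continuous) inverse of t on [0,T_N].\<close>
definition lrs_zinv :: "real \<Rightarrow> (real \<Rightarrow> real) \<Rightarrow> nat \<Rightarrow> real \<Rightarrow> real" where
  "lrs_zinv \<eta>0 \<zeta> N \<tau> = Inf {z \<in> {0..real N}. \<tau> \<le> lrs_time \<eta>0 \<zeta> N z}"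

definition lrs_phi :: "real \<Rightarrow> (real \<Rightarrow> real) \<Rightarrow> nat \<Rightarrow> real \<Rightarrow> real" where
  "lrs_phi \<eta>0 \<zeta> N \<tau> = lrs_eta \<eta>0 \<zeta> N (lrs_zinv \<eta>0 \<zeta> N \<tau>)"

definition lrs_K :: "real \<Rightarrow> real \<Rightarrow> real" where
  "lrs_K \<beta> u = (1 + u) powr (-(2 - 1 / \<beta>))"

definition lrs_F :: "real \<Rightarrow> real \<Rightarrow> real \<Rightarrow> (real \<Rightarrow> real) \<Rightarrow> nat \<Rightarrow> real" where
  "lrs_F s \<beta> \<eta>0 \<zeta> N =
     (let T = lrs_T \<eta>0 \<zeta> N in
      (1 + T) powr (-s) + (LINT \<tau>:{0..T}|lborel. lrs_K \<beta> (T - \<tau>) * lrs_phi \<eta>0 \<zeta> N \<tau>))"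

end

theory Submission imports Defs begin

lemma setint_bounded:
  fixes f :: "real \<Rightarrow> real"
  assumes m: "(\<lambda>x. indicator {a..b} x * f x) \<in> borel_measurable borel"
    and bnd: "\<And>x. x \<in> {a..b} \<Longrightarrow> \<bar>f x\<bar> \<le> B"
  shows "set_integrable lborel {a..b} f"
  unfolding set_integrable_def
proof (rule integrableI_bounded_set[where A="{a..b}" and B=B])
  show "{a..b} \<in> sets lborel" by simp
  show "(\<lambda>x. indicator {a..b} x *\<^sub>R f x) \<in> borel_measurable lborel" using m by simp
  show "emeasure lborel {a..b} < \<infinity>" by (cases "a \<le> b") (auto simp: emeasure_lborel_Icc_eq)
  show "AE x in lborel. x \<in> {a..b} \<longrightarrow> norm (indicator {a..b} x *\<^sub>R f x) \<le> B"
    using bnd by (auto simp: indicator_def)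
  show "AE x in lborel. x \<notin> {a..b} \<longrightarrow> indicator {a..b} x *\<^sub>R f x = 0" by simp
qed

lemma aux1:
  fixes A Bb Cc D W P :: real
  assumes "0 < A" "0 < Bb" "0 < Cc" "0 < D" "W \<le> A / Bb * (Cc * P / D)"
  shows "D * Bb / Cc * (W / A) \<le> P"
proof -
  have "W * (Bb * D) \<le> A * Cc * P" using assms by (simp add: field_simps)
  then show ?thesis using assms by (simp add: field_simps)
qed

definition Gf :: "real \<Rightarrow> real \<Rightarrow> real" where
  "Gf e X = (if e = -1 then ln (1 + X) else (1 + X) powr (e + 1) / (e + 1))"

lemma kint:
  fixes T e X1 X2 :: real
  assumes "0 \<le> X1" "X1 \<le> X2"
  shows "((\<lambda>\<tau>. (1 + T - \<tau>) powr e) has_integral (Gf e X2 - Gf e X1)) {T - X2..T - X1}"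
proof -
  define A where "A = (\<lambda>\<tau>. - Gf e (T - \<tau>))"
  have "((\<lambda>\<tau>. (1 + T - \<tau>) powr e) has_integral (A (T - X1) - A (T - X2))) {T - X2..T - X1}"
  proof (rule fundamental_theorem_of_calculus_interior)
    show "T - X2 \<le> T - X1" using assms by simp
    show "continuous_on {T - X2..T - X1} A"
      unfolding A_def Gf_def using assms
      by (cases "e = -1") (auto intro!: continuous_intros)
    fix x assume x: "x \<in> {T - X2<..<T - X1}"
    then have pos: "1 + (T - x) > 0" using assms by simp
    have d1: "((\<lambda>\<tau>. 1 + (T - \<tau>)) has_real_derivative (- 1)) (at x)"
      by (auto intro!: derivative_eq_intros)
    have "(A has_real_derivative (1 + T - x) powr e) (at x)"
    proof (cases "e = -1")
      case True
      have "((\<lambda>\<tau>. ln (1 + (T - \<tau>))) has_real_derivative (1 / (1 + (T - x))) * (- 1)) (at x)"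
        using DERIV_ln_divide[OF pos] d1 by (rule DERIV_chain2)
      then have "(A has_real_derivative (1 / (1 + (T - x)))) (at x)"
        unfolding A_def Gf_def using True by (auto dest: DERIV_minus)
      moreover have "(1 + T - x) powr e = 1 / (1 + (T - x))" using True pos
        by (simp add: powr_minus_divide add.assoc)
      ultimately show ?thesis by simp
    next
      case False
      from DERIV_fun_powr[OF d1 pos, of "e + 1"]
      have "((\<lambda>\<tau>. (1 + (T - \<tau>)) powr (e + 1)) has_real_derivative (e + 1) * (1 + (T - x)) powr e * (- 1)) (at x)"
        by simp
      then have "((\<lambda>\<tau>. - ((1 + (T - \<tau>)) powr (e + 1) / (e + 1))) has_real_derivative - ((e + 1) * (1 + (T - x)) powr e * (- 1) / (e + 1))) (at x)"
        by (intro DERIV_minus DERIV_cdivide)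
      moreover have "- ((e + 1) * (1 + (T - x)) powr e * (- 1) / (e + 1)) = (1 + T - x) powr e"
        using False by (simp add: add_diff_eq)
      ultimately show ?thesis unfolding A_def Gf_def using False by (simp add: add.assoc)
    qed
    then show "(A has_vector_derivative (1 + T - x) powr e) (at x)"
      by (simp add: has_real_derivative_iff_has_vector_derivative)
  qed
  moreover have "A (T - X1) - A (T - X2) = Gf e X2 - Gf e X1" by (simp add: A_def)
  ultimately show ?thesis by simp
qed

locale lrs =
  fixes \<zeta> :: "real \<Rightarrow> real" and \<gamma> \<delta> c1 c2 \<eta>0 :: real and N :: nat
  assumes prof: "lrs_profile \<zeta>"
    and gpos: "\<gamma> > 0" and d0: "0 < \<delta>" and d1: "\<delta> < 1" and c1: "0 < c1" and c2: "0 < c2"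
    and tail: "\<And>x. x \<in> {\<delta>..1} \<Longrightarrow> c1 * (1 - x) powr \<gamma> \<le> \<zeta> x \<and> \<zeta> x \<le> c2 * (1 - x) powr \<gamma>"
    and e0: "\<eta>0 > 0" and Npos: "N > 0"
begin

abbreviation "Nr \<equiv> real N"
abbreviation "eta \<equiv> lrs_eta \<eta>0 \<zeta> N"
abbreviation "tt \<equiv> lrs_time \<eta>0 \<zeta> N"
abbreviation "TT \<equiv> lrs_T \<eta>0 \<zeta> N"
abbreviation "zi \<equiv> lrs_zinv \<eta>0 \<zeta> N"
abbreviation "ph \<equiv> lrs_phi \<eta>0 \<zeta> N"

definition "Z = (\<lambda>x. indicator {0..1} x *\<^sub>R \<zeta> x)"

lemma Nr_pos: "Nr > 0" using Npos by simp

lemma Z_meas: "Z \<in> borel_measurable borel"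
  using prof unfolding lrs_profile_def set_borel_measurable_def Z_def by simp

lemma zeta01: "x \<in> {0..1} \<Longrightarrow> 0 \<le> \<zeta> x \<and> \<zeta> x \<le> 1"
  using prof unfolding lrs_profile_def by auto

lemma eta_Z: "u \<in> {0..Nr} \<Longrightarrow> eta u = \<eta>0 * Z (u / Nr)"
  using Nr_pos by (auto simp: lrs_eta_def Z_def indicator_def field_simps)

lemma eta_bnd: "u \<in> {0..Nr} \<Longrightarrow> 0 \<le> eta u \<and> eta u \<le> \<eta>0"
proof -
  assume u: "u \<in> {0..Nr}"
  then have "u / Nr \<in> {0..1}" using Nr_pos by (auto simp: field_simps)
  from zeta01[OF this] e0 show ?thesis
    by (auto simp: lrs_eta_def intro: mult_left_le[where c=1, simplified] mult_nonneg_nonneg)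
qed

lemma eta_meas:
  assumes "0 \<le> a" "b \<le> Nr"
  shows "(\<lambda>u. indicator {a..b} u * eta u) \<in> borel_measurable borel"
proof -
  have "(\<lambda>u. indicator {a..b} u * eta u) = (\<lambda>u. indicator {a..b} u * (\<eta>0 * Z (u / Nr)))"
    using assms eta_Z by (auto simp: indicator_def fun_eq_iff)
  also have "\<dots> \<in> borel_measurable borel"
    using Z_meas by (intro borel_measurable_times borel_measurable_indicator measurable_compose[OF _ Z_meas]) auto
  finally show ?thesis .
qed

lemma eta_setint:
  assumes "0 \<le> a" "b \<le> Nr"
  shows "set_integrable lborel {a..b} eta"
  by (rule setint_bounded[OF eta_meas[OF assms], where B=\<eta>0]) (use eta_bnd assms in auto)

lemma eta_int:
  assumes "0 \<le> a" "b \<le> Nr"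
  shows "eta integrable_on {a..b}"
  using set_borel_integral_eq_integral(1)[OF eta_setint[OF assms]] .

lemma tt_eq: "0 \<le> z \<Longrightarrow> z \<le> Nr \<Longrightarrow> tt z = integral {0..z} eta"
  unfolding lrs_time_def using set_borel_integral_eq_integral(2)[OF eta_setint] by simp

lemma tt_diff:
  assumes "0 \<le> z1" "z1 \<le> z2" "z2 \<le> Nr"
  shows "tt z2 - tt z1 = integral {z1..z2} eta"
  using Henstock_Kurzweil_Integration.integral_combine[OF _ _ eta_int[of 0 z2], of z1] assms tt_eq by auto

lemma int_bounds:
  assumes "0 \<le> z1" "z1 \<le> z2" "z2 \<le> Nr"
  shows "0 \<le> integral {z1..z2} eta \<and> integral {z1..z2} eta \<le> \<eta>0 * (z2 - z1)"
proof
  show "0 \<le> integral {z1..z2} eta"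
    using assms eta_bnd by (intro integral_nonneg eta_int) auto
  have "integral {z1..z2} eta \<le> integral {z1..z2} (\<lambda>_. \<eta>0)"
    using assms eta_bnd by (intro integral_le eta_int) auto
  then show "integral {z1..z2} eta \<le> \<eta>0 * (z2 - z1)" using assms by (simp add: mult.commute)
qed

lemma tt0: "tt 0 = 0"
  using tt_eq[of 0] by simp

lemma tt_cont: "continuous_on {0..Nr} tt"
proof (rule continuous_onI)
  fix x e :: real assume x: "x \<in> {0..Nr}" and e: "e > 0"
  show "\<exists>d>0. \<forall>x'\<in>{0..Nr}. dist x' x < d \<longrightarrow> dist (tt x') (tt x) \<le> e"
  proof (intro exI[of _ "e / \<eta>0"] conjI ballI impI)
    show "e / \<eta>0 > 0" using e e0 by simp
    fix y assume y: "y \<in> {0..Nr}" and d: "dist y x < e / \<eta>0"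
    have "\<bar>tt y - tt x\<bar> \<le> \<eta>0 * \<bar>y - x\<bar>"
    proof (cases "x \<le> y")
      case True then show ?thesis using tt_diff[of x y] int_bounds[of x y] x y by auto
    next
      case False then show ?thesis using tt_diff[of y x] int_bounds[of y x] x y by auto
    qed
    also have "\<dots> \<le> e" using d e0 by (simp add: dist_real_def field_simps)
    finally show "dist (tt y) (tt x) \<le> e" by (simp add: dist_real_def)
  qed
qed

lemma tt_mono: "0 \<le> z1 \<Longrightarrow> z1 \<le> z2 \<Longrightarrow> z2 \<le> Nr \<Longrightarrow> tt z1 \<le> tt z2"
  using tt_diff int_bounds by fastforce


lemma TT_eq: "TT = tt Nr" by (simp add: lrs_T_def)

lemma zi_props:
  assumes tau: "\<tau> \<in> {0..TT}"
  shows "zi \<tau> \<in> {0..Nr} \<and> tt (zi \<tau>) = \<tau>"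
proof -
  define S where "S = {z \<in> {0..Nr}. \<tau> \<le> tt z}"
  have zi: "zi \<tau> = Inf S" by (simp add: S_def lrs_zinv_def)
  have NS: "Nr \<in> S" using tau TT_eq Nr_pos by (simp add: S_def)
  have bdd: "bdd_below S" by (auto simp: S_def bdd_below_def)
  have "S = {0..Nr} \<inter> tt -` {\<tau>..}" by (auto simp: S_def)
  then have cl: "closed S" using continuous_closed_preimage[OF tt_cont] by simp
  have inS: "Inf S \<in> S" using closed_contains_Inf[OF _ bdd cl] NS by auto
  then have z0: "Inf S \<in> {0..Nr}" "\<tau> \<le> tt (Inf S)" by (auto simp: S_def)
  have "continuous_on {0..Inf S} tt" by (rule continuous_on_subset[OF tt_cont]) (use z0 in auto)
  then obtain x where x: "0 \<le> x" "x \<le> Inf S" "tt x = \<tau>"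
    using IVT'[of tt 0 \<tau> "Inf S"] z0 tt0 tau by auto
  then have "x \<in> S" using z0 by (auto simp: S_def)
  then have "Inf S \<le> x" using bdd by (rule cInf_lower)
  then have "x = Inf S" using x by simp
  then show ?thesis using zi z0 x by simp
qed

lemma zi_mono:
  assumes "0 \<le> \<tau>1" "\<tau>1 \<le> \<tau>2" "\<tau>2 \<le> TT"
  shows "zi \<tau>1 \<le> zi \<tau>2"
proof -
  have "Inf {z \<in> {0..Nr}. \<tau>1 \<le> tt z} \<le> Inf {z \<in> {0..Nr}. \<tau>2 \<le> tt z}"
    by (rule cInf_superset_mono) (use assms TT_eq Nr_pos in \<open>auto simp: bdd_below_def\<close>)
  then show ?thesis by (simp add: lrs_zinv_def)
qed

lemma powr_int:
  assumes "0 \<le> z" "z \<le> Nr"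
  shows "((\<lambda>u. (1 - u / Nr) powr \<gamma>) has_integral Nr * (1 - z / Nr) powr (\<gamma> + 1) / (\<gamma> + 1)) {z..Nr}"
proof -
  define F where "F = (\<lambda>u. - (Nr * (1 - u / Nr) powr (\<gamma> + 1) / (\<gamma> + 1)))"
  have "((\<lambda>u. (1 - u / Nr) powr \<gamma>) has_integral (F Nr - F z)) {z..Nr}"
  proof (rule fundamental_theorem_of_calculus_interior)
    show "z \<le> Nr" by fact
    show "continuous_on {z..Nr} F" unfolding F_def
      using gpos assms Nr_pos by (intro continuous_intros continuous_on_powr') (auto simp: field_simps)
    fix x assume x: "x \<in> {z<..<Nr}"
    then have pos: "1 - x / Nr > 0" using Nr_pos by (auto simp: field_simps)
    have "((\<lambda>u. 1 - u / Nr) has_real_derivative (- 1 / Nr)) (at x)"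
      using Npos by (auto intro!: derivative_eq_intros)
    from DERIV_fun_powr[OF this pos, of "\<gamma> + 1"]
    have D: "((\<lambda>u. (1 - u / Nr) powr (\<gamma> + 1)) has_real_derivative (\<gamma> + 1) * (1 - x / Nr) powr \<gamma> * (- 1 / Nr)) (at x)"
      by simp
    have "(F has_real_derivative - (Nr * ((\<gamma> + 1) * (1 - x / Nr) powr \<gamma> * (- 1 / Nr)) / (\<gamma> + 1))) (at x)"
      unfolding F_def by (intro DERIV_minus DERIV_cdivide DERIV_cmult D)
    moreover have "- (Nr * ((\<gamma> + 1) * (1 - x / Nr) powr \<gamma> * (- 1 / Nr)) / (\<gamma> + 1)) = (1 - x / Nr) powr \<gamma>"
    proof -
      have "Nr * ((\<gamma> + 1) * (1 - x / Nr) powr \<gamma> * (- 1 / Nr)) = - ((\<gamma> + 1) * (1 - x / Nr) powr \<gamma>)"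
        using Nr_pos by (simp add: field_simps)
      then show ?thesis using gpos by simp
    qed
    ultimately have "(F has_real_derivative (1 - x / Nr) powr \<gamma>) (at x)" by simp
    then show "(F has_vector_derivative (1 - x / Nr) powr \<gamma>) (at x)"
      by (simp add: has_real_derivative_iff_has_vector_derivative)
  qed
  moreover have "F Nr - F z = Nr * (1 - z / Nr) powr (\<gamma> + 1) / (\<gamma> + 1)"
    using Nr_pos gpos by (simp add: F_def)
  ultimately show ?thesis by simp
qed

lemma tail_int:
  assumes "\<delta> * Nr \<le> z" "z \<le> Nr"
  shows "\<eta>0 * c1 * (Nr * (1 - z / Nr) powr (\<gamma> + 1) / (\<gamma> + 1)) \<le> integral {z..Nr} eta"
    and "integral {z..Nr} eta \<le> \<eta>0 * c2 * (Nr * (1 - z / Nr) powr (\<gamma> + 1) / (\<gamma> + 1))"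
proof -
  have z0: "0 \<le> z" using assms d0 Nr_pos by (meson less_eq_real_def mult_pos_pos order_trans)
  note I = powr_int[OF z0 assms(2)]
  have uu: "u / Nr \<in> {\<delta>..1}" if "u \<in> {z..Nr}" for u
    using that assms Nr_pos by (auto simp: field_simps)
  have eu: "eta u = \<eta>0 * \<zeta> (u / Nr)" for u by (simp add: lrs_eta_def)
  have "integral {z..Nr} (\<lambda>u. \<eta>0 * c1 * (1 - u / Nr) powr \<gamma>) \<le> integral {z..Nr} eta"
  proof (rule integral_le)
    show "(\<lambda>u. \<eta>0 * c1 * (1 - u / Nr) powr \<gamma>) integrable_on {z..Nr}"
      using has_integral_mult_right[OF I, of "\<eta>0 * c1"] by (auto simp: has_integral_integrable)
    show "eta integrable_on {z..Nr}" using z0 by (intro eta_int) auto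
    fix u assume "u \<in> {z..Nr}"
    from tail[OF uu[OF this]] e0 show "\<eta>0 * c1 * (1 - u / Nr) powr \<gamma> \<le> eta u"
      unfolding eu by (simp add: mult.assoc)
  qed
  moreover have "integral {z..Nr} (\<lambda>u. \<eta>0 * c1 * (1 - u / Nr) powr \<gamma>) = \<eta>0 * c1 * (Nr * (1 - z / Nr) powr (\<gamma> + 1) / (\<gamma> + 1))"
    using I by (simp add: integral_unique has_integral_mult_right)
  ultimately show "\<eta>0 * c1 * (Nr * (1 - z / Nr) powr (\<gamma> + 1) / (\<gamma> + 1)) \<le> integral {z..Nr} eta" by simp
  have "integral {z..Nr} eta \<le> integral {z..Nr} (\<lambda>u. \<eta>0 * c2 * (1 - u / Nr) powr \<gamma>)"
  proof (rule integral_le)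
    show "(\<lambda>u. \<eta>0 * c2 * (1 - u / Nr) powr \<gamma>) integrable_on {z..Nr}"
      using has_integral_mult_right[OF I, of "\<eta>0 * c2"] by (auto simp: has_integral_integrable)
    show "eta integrable_on {z..Nr}" using z0 by (intro eta_int) auto
    fix u assume "u \<in> {z..Nr}"
    from tail[OF uu[OF this]] e0 show "eta u \<le> \<eta>0 * c2 * (1 - u / Nr) powr \<gamma>"
      unfolding eu by (simp add: mult.assoc)
  qed
  moreover have "integral {z..Nr} (\<lambda>u. \<eta>0 * c2 * (1 - u / Nr) powr \<gamma>) = \<eta>0 * c2 * (Nr * (1 - z / Nr) powr (\<gamma> + 1) / (\<gamma> + 1))"
    using I by (simp add: integral_unique has_integral_mult_right)
  ultimately show "integral {z..Nr} eta \<le> \<eta>0 * c2 * (Nr * (1 - z / Nr) powr (\<gamma> + 1) / (\<gamma> + 1))" by simp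
qed


lemma TT_int: "TT = integral {0..Nr} eta" using TT_eq tt_eq Nr_pos by simp

lemma TT_upper: "TT \<le> \<eta>0 * Nr"
  using TT_int int_bounds[of 0 Nr] Nr_pos by simp

definition "Bc = c1 * (1 - \<delta>) powr (\<gamma> + 1) / (\<gamma> + 1)"
definition "ea = \<gamma> / (\<gamma> + 1)"

lemma Bc_pos: "Bc > 0" using c1 d1 gpos by (simp add: Bc_def)
lemma ea_pos: "0 < ea" "ea < 1" using gpos by (auto simp: ea_def)

lemma dN: "0 \<le> \<delta> * Nr" "\<delta> * Nr \<le> Nr" using d0 d1 Nr_pos by auto

lemma tail_from_delta: "\<eta>0 * Nr * Bc \<le> integral {\<delta> * Nr..Nr} eta"
  using tail_int(1)[OF order_refl dN(2)] Nr_pos by (simp add: Bc_def field_simps)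

lemma TT_lower: "\<eta>0 * Nr * Bc \<le> TT"
proof -
  have "TT - tt (\<delta> * Nr) = integral {\<delta> * Nr..Nr} eta"
    using tt_diff[OF dN(1) dN(2) order_refl] TT_eq by simp
  moreover have "tt (\<delta> * Nr) \<ge> 0" using tt_mono[OF order_refl dN(1)] dN tt0 by simp
  ultimately show ?thesis using tail_from_delta by simp
qed

lemma TT_pos: "TT > 0"
  using TT_lower Bc_pos e0 Nr_pos by (smt (verit) mult_pos_pos)

lemma w_eq: "\<tau> \<in> {0..TT} \<Longrightarrow> TT - \<tau> = integral {zi \<tau>..Nr} eta"
  using zi_props[of \<tau>] tt_diff[of "zi \<tau>" Nr] TT_eq by auto

lemma ph_eq: "ph \<tau> = \<eta>0 * \<zeta> (zi \<tau> / Nr)" by (simp add: lrs_phi_def lrs_eta_def)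

lemma powr_a: "x \<ge> 0 \<Longrightarrow> (x powr (\<gamma> + 1)) powr ea = x powr \<gamma>"
  using gpos by (simp add: powr_powr ea_def)

lemma w_small_tail:
  assumes tau: "\<tau> \<in> {0..TT}" and x: "zi \<tau> / Nr < \<delta>"
  shows "TT * Bc \<le> TT - \<tau>"
proof -
  have z: "zi \<tau> \<in> {0..Nr}" "tt (zi \<tau>) = \<tau>" using zi_props[OF tau] by auto
  have "zi \<tau> \<le> \<delta> * Nr" using x Nr_pos by (simp add: field_simps)
  then have "tt (zi \<tau>) \<le> tt (\<delta> * Nr)" using tt_mono[of "zi \<tau>" "\<delta> * Nr"] z dN by auto
  moreover have "TT - tt (\<delta> * Nr) = integral {\<delta> * Nr..Nr} eta"
    using tt_diff[OF dN(1) dN(2) order_refl] TT_eq by simp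
  moreover have "TT * Bc \<le> \<eta>0 * Nr * Bc" using TT_upper Bc_pos by simp
  ultimately show ?thesis using tail_from_delta z by linarith
qed

definition "Au = max (c2 * ((\<gamma> + 1) / c1) powr ea) (Bc powr (- ea))"

lemma ph_upper:
  assumes tau: "\<tau> \<in> {0..TT}"
  shows "0 \<le> ph \<tau> \<and> ph \<tau> \<le> \<eta>0 \<and> ph \<tau> \<le> Au * \<eta>0 * ((TT - \<tau>) / TT) powr ea"
proof -
  have z: "zi \<tau> \<in> {0..Nr}" "tt (zi \<tau>) = \<tau>" using zi_props[OF tau] by auto
  define x where "x = zi \<tau> / Nr"
  have x01: "x \<in> {0..1}" using z Nr_pos by (auto simp: x_def field_simps)
  have phx: "ph \<tau> = \<eta>0 * \<zeta> x" by (simp add: ph_eq x_def)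
  have b1: "0 \<le> ph \<tau> \<and> ph \<tau> \<le> \<eta>0" using zeta01[OF x01] e0 phx
    by (simp add: mult_le_cancel_left1)
  have wpos: "0 \<le> (TT - \<tau>) / TT" using tau TT_pos by simp
  have "ph \<tau> \<le> Au * \<eta>0 * ((TT - \<tau>) / TT) powr ea"
  proof (cases "x < \<delta>")
    case True
    have "TT * Bc \<le> TT - \<tau>" using w_small_tail[OF tau] True by (simp add: x_def)
    then have "Bc \<le> (TT - \<tau>) / TT" using TT_pos by (simp add: field_simps)
    then have "Bc powr ea \<le> ((TT - \<tau>) / TT) powr ea"
      using Bc_pos ea_pos by (intro powr_mono2) auto
    then have "1 \<le> Bc powr (- ea) * ((TT - \<tau>) / TT) powr ea"
      using Bc_pos by (simp add: powr_minus field_simps)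
    moreover have "Bc powr (- ea) \<le> Au" by (simp add: Au_def)
    ultimately have "1 \<le> Au * ((TT - \<tau>) / TT) powr ea"
      by (meson dual_order.trans mult_right_mono powr_ge_zero)
    then have "\<eta>0 \<le> Au * \<eta>0 * ((TT - \<tau>) / TT) powr ea"
      using e0 by (smt (verit) mult.commute mult.left_commute mult_le_cancel_left1)
    then show ?thesis using b1 by simp
  next
    case False
    then have xd: "x \<in> {\<delta>..1}" using x01 by simp
    have zd: "\<delta> * Nr \<le> zi \<tau>" using False Nr_pos by (simp add: x_def field_simps)
    have zz: "1 - zi \<tau> / Nr = 1 - x" by (simp add: x_def)
    have "\<eta>0 * c1 * (Nr * (1 - x) powr (\<gamma> + 1) / (\<gamma> + 1)) \<le> TT - \<tau>"
      using tail_int(1)[OF zd] z w_eq[OF tau] by (simp add: zz)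
    moreover have "TT * (c1 * (1 - x) powr (\<gamma> + 1) / (\<gamma> + 1)) \<le> \<eta>0 * c1 * (Nr * (1 - x) powr (\<gamma> + 1) / (\<gamma> + 1))"
    proof -
      have "0 \<le> c1 * (1 - x) powr (\<gamma> + 1) / (\<gamma> + 1)" using c1 gpos by simp
      from mult_right_mono[OF TT_upper this] show ?thesis by (simp add: field_simps)
    qed
    ultimately have "TT * (c1 * (1 - x) powr (\<gamma> + 1) / (\<gamma> + 1)) \<le> TT - \<tau>" by linarith
    then have "(1 - x) powr (\<gamma> + 1) \<le> (\<gamma> + 1) / c1 * ((TT - \<tau>) / TT)"
      using TT_pos c1 gpos by (simp add: field_simps)
    then have A: "((1 - x) powr (\<gamma> + 1)) powr ea \<le> ((\<gamma> + 1) / c1 * ((TT - \<tau>) / TT)) powr ea"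
      using ea_pos by (intro powr_mono2) auto
    have "(1 - x) powr \<gamma> = ((1 - x) powr (\<gamma> + 1)) powr ea" using powr_a[of "1 - x"] x01 by simp
    also have "\<dots> \<le> ((\<gamma> + 1) / c1 * ((TT - \<tau>) / TT)) powr ea" by (rule A)
    also have "\<dots> = ((\<gamma> + 1) / c1) powr ea * ((TT - \<tau>) / TT) powr ea"
    proof -
      have "0 \<le> (\<gamma> + 1) / c1" using c1 gpos by simp
      show ?thesis by (rule powr_mult)
    qed
    finally have "(1 - x) powr \<gamma> \<le> ((\<gamma> + 1) / c1) powr ea * ((TT - \<tau>) / TT) powr ea" .
    then have "c2 * (1 - x) powr \<gamma> \<le> c2 * ((\<gamma> + 1) / c1) powr ea * ((TT - \<tau>) / TT) powr ea"
      using c2 by (simp add: mult.assoc)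
    also have "\<dots> \<le> Au * ((TT - \<tau>) / TT) powr ea"
      by (intro mult_right_mono) (auto simp: Au_def)
    finally have "\<zeta> x \<le> Au * ((TT - \<tau>) / TT) powr ea" using tail[OF xd] by linarith
    then show ?thesis using e0 phx by (simp add: mult.assoc mult.left_commute)
  qed
  then show ?thesis using b1 by simp
qed

definition "bL = min (Bc / 2) (1 / 4)"
definition "Al = c1 * ((\<gamma> + 1) * Bc / c2) powr ea"

lemma bL_pos: "0 < bL" "bL \<le> 1/4" "bL < Bc" using Bc_pos by (auto simp: bL_def)

lemma ph_lower:
  assumes tau: "\<tau> \<in> {TT - bL * TT..TT}"
  shows "Al * \<eta>0 * ((TT - \<tau>) / TT) powr ea \<le> ph \<tau>"
proof -
  have "bL * TT \<le> TT" using bL_pos TT_pos by (intro mult_left_le_one_le) auto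
  then have tau0: "\<tau> \<in> {0..TT}" using tau by auto
  have z: "zi \<tau> \<in> {0..Nr}" "tt (zi \<tau>) = \<tau>" using zi_props[OF tau0] by auto
  define x where "x = zi \<tau> / Nr"
  have x01: "x \<in> {0..1}" using z Nr_pos by (auto simp: x_def field_simps)
  have phx: "ph \<tau> = \<eta>0 * \<zeta> x" by (simp add: ph_eq x_def)
  have wpos: "0 \<le> (TT - \<tau>) / TT" using tau0 TT_pos by simp
  have wle: "TT - \<tau> \<le> bL * TT" using tau by simp
  have "\<not> x < \<delta>"
  proof
    assume "x < \<delta>"
    then have "TT * Bc \<le> TT - \<tau>" using w_small_tail[OF tau0] by (simp add: x_def)
    moreover have "bL * TT < Bc * TT" using bL_pos TT_pos by simp
    ultimately show False using wle by (simp add: mult.commute)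
  qed
  then have xd: "x \<in> {\<delta>..1}" using x01 by simp
  have zd: "\<delta> * Nr \<le> zi \<tau>" using xd Nr_pos by (simp add: x_def field_simps)
  have zz: "1 - zi \<tau> / Nr = 1 - x" by (simp add: x_def)
  have "TT - \<tau> \<le> \<eta>0 * c2 * (Nr * (1 - x) powr (\<gamma> + 1) / (\<gamma> + 1))"
    using tail_int(2)[OF zd] z w_eq[OF tau0] by (simp add: zz)
  also have "\<dots> \<le> TT / Bc * (c2 * (1 - x) powr (\<gamma> + 1) / (\<gamma> + 1))"
  proof -
    have "\<eta>0 * Nr \<le> TT / Bc" using TT_lower Bc_pos by (simp add: field_simps)
    moreover have "0 \<le> c2 * (1 - x) powr (\<gamma> + 1) / (\<gamma> + 1)" using c2 gpos by simp
    ultimately show ?thesis using mult_right_mono by (fastforce simp: field_simps)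
  qed
  finally have "TT - \<tau> \<le> TT / Bc * (c2 * (1 - x) powr (\<gamma> + 1) / (\<gamma> + 1))" .
  then have "(\<gamma> + 1) * Bc / c2 * ((TT - \<tau>) / TT) \<le> (1 - x) powr (\<gamma> + 1)"
    using TT_pos c2 gpos Bc_pos by (intro aux1) auto
  moreover have h0: "0 \<le> (\<gamma> + 1) * Bc / c2" using c2 gpos Bc_pos by simp
  moreover have h: "0 \<le> (\<gamma> + 1) * Bc / c2 * ((TT - \<tau>) / TT)" using mult_nonneg_nonneg[OF h0 wpos] .
  ultimately have A: "((\<gamma> + 1) * Bc / c2 * ((TT - \<tau>) / TT)) powr ea \<le> ((1 - x) powr (\<gamma> + 1)) powr ea"
    using powr_mono2[OF less_imp_le[OF ea_pos(1)] h] by blast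
  have "((\<gamma> + 1) * Bc / c2) powr ea * ((TT - \<tau>) / TT) powr ea = ((\<gamma> + 1) * Bc / c2 * ((TT - \<tau>) / TT)) powr ea"
    by (rule powr_mult[symmetric])
  also have "\<dots> \<le> ((1 - x) powr (\<gamma> + 1)) powr ea" by (rule A)
  also have "\<dots> = (1 - x) powr \<gamma>" using powr_a[of "1 - x"] x01 by simp
  finally have "((\<gamma> + 1) * Bc / c2) powr ea * ((TT - \<tau>) / TT) powr ea \<le> (1 - x) powr \<gamma>" .
  then have "Al * ((TT - \<tau>) / TT) powr ea \<le> c1 * (1 - x) powr \<gamma>"
    using c1 by (simp add: Al_def mult.assoc)
  also have "\<dots> \<le> \<zeta> x" using tail[OF xd] by simp
  finally show ?thesis using e0 phx by (simp add: mult.assoc mult.left_commute)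
qed


definition "zc = (\<lambda>\<tau>. zi (max 0 (min \<tau> TT)))"

lemma zc_mono: "mono zc"
  unfolding zc_def mono_def using TT_pos by (intro allI impI zi_mono) auto

lemma zc_meas: "zc \<in> borel_measurable borel"
  using borel_measurable_mono[OF zc_mono] .


lemma h_meas: "(\<lambda>\<tau>. indicator {0..TT} \<tau> * (lrs_K \<beta> (TT - \<tau>) * ph \<tau>)) \<in> borel_measurable borel"
proof -
  have eq: "ph \<tau> = \<eta>0 * Z (zc \<tau> / Nr)" if "\<tau> \<in> {0..TT}" for \<tau>
  proof -
    have "zc \<tau> = zi \<tau>" using that by (simp add: zc_def)
    moreover have "zi \<tau> / Nr \<in> {0..1}" using zi_props[OF that] Nr_pos by (auto simp: field_simps)
    ultimately show ?thesis by (simp add: ph_eq Z_def)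
  qed
  have "(\<lambda>\<tau>. indicator {0..TT} \<tau> * (lrs_K \<beta> (TT - \<tau>) * ph \<tau>)) =
        (\<lambda>\<tau>. indicator {0..TT} \<tau> * (lrs_K \<beta> (TT - \<tau>) * (\<eta>0 * Z (zc \<tau> / Nr))))"
    using eq by (auto simp: fun_eq_iff indicator_def)
  also have "\<dots> \<in> borel_measurable borel"
  proof -
    have m1: "(\<lambda>\<tau>. Z (zc \<tau> / Nr)) \<in> borel_measurable borel"
      by (rule measurable_compose[OF _ Z_meas]) (use zc_meas in simp)
    show ?thesis unfolding lrs_K_def using m1 by measurable
  qed
  finally show ?thesis .
qed


lemma K_bnd: "0 \<le> u \<Longrightarrow> 1 < \<beta> \<Longrightarrow> 0 \<le> lrs_K \<beta> u \<and> lrs_K \<beta> u \<le> 1"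
proof -
  assume u: "0 \<le> u" and b: "1 < \<beta>"
  have "-(2 - 1 / \<beta>) \<le> 0" using b by (simp add: field_simps)
  then have "(1 + u) powr (-(2 - 1 / \<beta>)) \<le> (1 + u) powr 0" using u by (intro powr_mono) auto
  then show ?thesis using u by (simp add: lrs_K_def)
qed

abbreviation "hh \<beta> \<equiv> (\<lambda>\<tau>. lrs_K \<beta> (TT - \<tau>) * ph \<tau>)"

lemma h_bnd: "1 < \<beta> \<Longrightarrow> \<tau> \<in> {0..TT} \<Longrightarrow> 0 \<le> hh \<beta> \<tau> \<and> hh \<beta> \<tau> \<le> \<eta>0"
proof -
  assume b: "1 < \<beta>" and t: "\<tau> \<in> {0..TT}"
  have k: "0 \<le> lrs_K \<beta> (TT - \<tau>) \<and> lrs_K \<beta> (TT - \<tau>) \<le> 1" using K_bnd[OF _ b] t by simp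
  have p: "0 \<le> ph \<tau> \<and> ph \<tau> \<le> \<eta>0" using ph_upper[OF t] by simp
  have "lrs_K \<beta> (TT - \<tau>) * ph \<tau> \<le> 1 * \<eta>0" using k p by (intro mult_mono) auto
  then show ?thesis using k p by simp
qed

lemma h_setint: "1 < \<beta> \<Longrightarrow> set_integrable lborel {0..TT} (hh \<beta>)"
  by (rule setint_bounded[OF h_meas, where B = \<eta>0]) (use h_bnd in auto)

lemma h_int: "1 < \<beta> \<Longrightarrow> hh \<beta> integrable_on {0..TT}"
  using set_borel_integral_eq_integral(1)[OF h_setint] .

lemma F_eq: "1 < \<beta> \<Longrightarrow> lrs_F s \<beta> \<eta>0 \<zeta> N = (1 + TT) powr (-s) + integral {0..TT} (hh \<beta>)"
  unfolding lrs_F_def Let_def using set_borel_integral_eq_integral(2)[OF h_setint] by simp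

lemma split_T: "0 \<le> w \<Longrightarrow> (w / TT) powr ea = TT powr (- ea) * w powr ea"
  using TT_pos by (simp only: powr_divide powr_minus) (simp add: field_simps)

lemma pa: "(1 + (TT - \<tau>)) powr (-(2 - 1 / \<beta>)) * (1 + (TT - \<tau>)) powr ea = (1 + TT - \<tau>) powr (ea - (2 - 1 / \<beta>))"
proof -
  have "(1 + (TT - \<tau>)) powr (-(2 - 1 / \<beta>)) * (1 + (TT - \<tau>)) powr ea = (1 + (TT - \<tau>)) powr (-(2 - 1 / \<beta>) + ea)"
    by (rule powr_add[symmetric])
  also have "\<dots> = (1 + TT - \<tau>) powr (ea - (2 - 1 / \<beta>))"
    by (intro arg_cong2[where f="(powr)"]) auto
  finally show ?thesis .
qed

lemma h_upper:
  assumes b: "1 < \<beta>" and t: "\<tau> \<in> {0..TT}"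
  shows "hh \<beta> \<tau> \<le> Au * \<eta>0 * TT powr (- ea) * (1 + TT - \<tau>) powr (ea - (2 - 1 / \<beta>))"
proof -
  have k: "0 \<le> lrs_K \<beta> (TT - \<tau>)" using K_bnd[OF _ b] t by simp
  have w: "0 \<le> TT - \<tau>" using t by simp
  have Au0: "0 \<le> Au" using c2 c1 by (simp add: Au_def le_max_iff_disj)
  have "hh \<beta> \<tau> \<le> lrs_K \<beta> (TT - \<tau>) * (Au * \<eta>0 * ((TT - \<tau>) / TT) powr ea)"
    using ph_upper[OF t] k by (intro mult_left_mono) auto
  also have "\<dots> = Au * \<eta>0 * TT powr (- ea) * ((1 + (TT - \<tau>)) powr (-(2 - 1 / \<beta>)) * (TT - \<tau>) powr ea)"
    using split_T[OF w] by (simp add: lrs_K_def mult_ac)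
  also have "\<dots> \<le> Au * \<eta>0 * TT powr (- ea) * ((1 + (TT - \<tau>)) powr (-(2 - 1 / \<beta>)) * (1 + (TT - \<tau>)) powr ea)"
    using w ea_pos Au0 e0 by (intro mult_left_mono powr_mono2) auto
  also have "\<dots> = Au * \<eta>0 * TT powr (- ea) * (1 + TT - \<tau>) powr (ea - (2 - 1 / \<beta>))"
    by (simp only: pa)
  finally show ?thesis .
qed

definition "Cl = Al * (bL / (1 + bL)) powr ea"

lemma h_lower:
  assumes b: "1 < \<beta>" and t: "\<tau> \<in> {TT - bL * TT..TT - bL}"
  shows "Cl * \<eta>0 * TT powr (- ea) * (1 + TT - \<tau>) powr (ea - (2 - 1 / \<beta>)) \<le> hh \<beta> \<tau>"
proof -
  have "bL * TT \<le> TT" using bL_pos TT_pos by (intro mult_left_le_one_le) auto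
  then have t0: "\<tau> \<in> {0..TT}" using t bL_pos by auto
  have t1: "\<tau> \<in> {TT - bL * TT..TT}" using t bL_pos by auto
  have k: "0 \<le> lrs_K \<beta> (TT - \<tau>)" using K_bnd[OF _ b] t0 by simp
  have w: "bL \<le> TT - \<tau>" using t by simp
  then have w0: "0 \<le> TT - \<tau>" using bL_pos by simp
  have Al0: "0 \<le> Al" using c1 by (simp add: Al_def)
  have q: "bL / (1 + bL) \<le> (TT - \<tau>) / (1 + (TT - \<tau>))"
    using w bL_pos w0 by (simp add: field_simps)
  have "(bL / (1 + bL)) powr ea * (1 + (TT - \<tau>)) powr ea \<le> ((TT - \<tau>) / (1 + (TT - \<tau>))) powr ea * (1 + (TT - \<tau>)) powr ea"
    using q bL_pos ea_pos by (intro mult_right_mono powr_mono2) auto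
  also have "\<dots> = (TT - \<tau>) powr ea" using w0 by (simp add: powr_divide)
  finally have wp: "(bL / (1 + bL)) powr ea * (1 + (TT - \<tau>)) powr ea \<le> (TT - \<tau>) powr ea" .
  have "Cl * \<eta>0 * TT powr (- ea) * (1 + TT - \<tau>) powr (ea - (2 - 1 / \<beta>)) =
        lrs_K \<beta> (TT - \<tau>) * (Al * \<eta>0 * TT powr (- ea) * ((bL / (1 + bL)) powr ea * (1 + (TT - \<tau>)) powr ea))"
    unfolding pa[symmetric] by (simp add: Cl_def lrs_K_def mult_ac)
  also have "\<dots> \<le> lrs_K \<beta> (TT - \<tau>) * (Al * \<eta>0 * TT powr (- ea) * (TT - \<tau>) powr ea)"
    using wp k Al0 e0 by (intro mult_left_mono) auto
  also have "\<dots> = lrs_K \<beta> (TT - \<tau>) * (Al * \<eta>0 * ((TT - \<tau>) / TT) powr ea)"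
    using split_T[OF w0] by (simp add: mult_ac)
  also have "\<dots> \<le> hh \<beta> \<tau>"
    using ph_lower[OF t1] k by (intro mult_left_mono) auto
  finally show ?thesis .
qed


lemma hh_nonneg: "1 < \<beta> \<Longrightarrow> \<forall>x\<in>{0..TT}. 0 \<le> hh \<beta> x" using h_bnd by blast

lemma Iu_sub:
  assumes b: "1 < \<beta>" and X: "bL \<le> X1" "X1 \<le> X2" "X2 \<le> bL * TT"
  shows "integral {TT - X2..TT - X1} (hh \<beta>) \<le> integral {0..TT} (hh \<beta>)"
proof -
  have "bL * TT \<le> TT" using bL_pos TT_pos by (intro mult_left_le_one_le) auto
  then have sub: "{TT - X2..TT - X1} \<subseteq> {0..TT}" using X bL_pos by auto
  show ?thesis
    by (rule integral_subset_le[OF sub integrable_on_subinterval[OF h_int[OF b] sub] h_int[OF b] hh_nonneg[OF b]])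
qed

lemma Iu_lower_G:
  assumes b: "1 < \<beta>" and X: "bL \<le> X1" "X1 \<le> X2" "X2 \<le> bL * TT"
  shows "Cl * \<eta>0 * TT powr (- ea) * (Gf (ea - (2 - 1 / \<beta>)) X2 - Gf (ea - (2 - 1 / \<beta>)) X1) \<le> integral {0..TT} (hh \<beta>)"
proof -
  have "bL * TT \<le> TT" using bL_pos TT_pos by (intro mult_left_le_one_le) auto
  then have sub: "{TT - X2..TT - X1} \<subseteq> {0..TT}" using X bL_pos by auto
  have I: "((\<lambda>\<tau>. Cl * \<eta>0 * TT powr (- ea) * (1 + TT - \<tau>) powr (ea - (2 - 1 / \<beta>))) has_integral
     Cl * \<eta>0 * TT powr (- ea) * (Gf (ea - (2 - 1 / \<beta>)) X2 - Gf (ea - (2 - 1 / \<beta>)) X1)) {TT - X2..TT - X1}"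
    using X bL_pos by (intro has_integral_mult_right kint) auto
  have "Cl * \<eta>0 * TT powr (- ea) * (Gf (ea - (2 - 1 / \<beta>)) X2 - Gf (ea - (2 - 1 / \<beta>)) X1) \<le> integral {TT - X2..TT - X1} (hh \<beta>)"
  proof (rule has_integral_le[OF I])
    show "(hh \<beta> has_integral integral {TT - X2..TT - X1} (hh \<beta>)) {TT - X2..TT - X1}"
      using integrable_on_subinterval[OF h_int[OF b] sub] by (simp add: integrable_integral)
    fix x assume "x \<in> {TT - X2..TT - X1}"
    then have "x \<in> {TT - bL * TT..TT - bL}" using X by auto
    from h_lower[OF b this] show "Cl * \<eta>0 * TT powr (- ea) * (1 + TT - x) powr (ea - (2 - 1 / \<beta>)) \<le> hh \<beta> x" .
  qed
  also have "\<dots> \<le> integral {0..TT} (hh \<beta>)" using Iu_sub[OF b X] .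
  finally show ?thesis .
qed

lemma e_neg: "1 < \<beta> \<Longrightarrow> ea - (2 - 1 / \<beta>) < 0"
  using ea_pos by (smt (verit) divide_less_eq_1_pos)

lemma Cl_pos: "0 < Cl" using c1 c2 Bc_pos gpos bL_pos by (simp add: Cl_def Al_def)
lemma Au_pos: "0 < Au" using c1 c2 gpos by (simp add: Au_def less_max_iff_disj)

lemma Iu_lower_const:
  assumes b: "1 < \<beta>" and X: "bL \<le> X1" "X1 \<le> X2" "X2 \<le> bL * TT"
  shows "Cl * \<eta>0 * TT powr (- ea) * ((1 + X2) powr (ea - (2 - 1 / \<beta>)) * (X2 - X1)) \<le> integral {0..TT} (hh \<beta>)"
proof -
  have "bL * TT \<le> TT" using bL_pos TT_pos by (intro mult_left_le_one_le) auto
  then have sub: "{TT - X2..TT - X1} \<subseteq> {0..TT}" using X bL_pos by auto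
  have I: "((\<lambda>\<tau>. Cl * \<eta>0 * TT powr (- ea) * (1 + X2) powr (ea - (2 - 1 / \<beta>))) has_integral
     Cl * \<eta>0 * TT powr (- ea) * ((1 + X2) powr (ea - (2 - 1 / \<beta>)) * (X2 - X1))) {TT - X2..TT - X1}"
    using has_integral_const_real[of "Cl * \<eta>0 * TT powr (- ea) * (1 + X2) powr (ea - (2 - 1 / \<beta>))" "TT - X2" "TT - X1"] X
    by (simp add: mult_ac)
  have "Cl * \<eta>0 * TT powr (- ea) * ((1 + X2) powr (ea - (2 - 1 / \<beta>)) * (X2 - X1)) \<le> integral {TT - X2..TT - X1} (hh \<beta>)"
  proof (rule has_integral_le[OF I])
    show "(hh \<beta> has_integral integral {TT - X2..TT - X1} (hh \<beta>)) {TT - X2..TT - X1}"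
      using integrable_on_subinterval[OF h_int[OF b] sub] by (simp add: integrable_integral)
    fix x assume x: "x \<in> {TT - X2..TT - X1}"
    then have "x \<in> {TT - bL * TT..TT - bL}" using X by auto
    note hl = h_lower[OF b this]
    have "(1 + X2) powr (ea - (2 - 1 / \<beta>)) \<le> (1 + TT - x) powr (ea - (2 - 1 / \<beta>))"
      using x X bL_pos e_neg[OF b] by (intro powr_mono2') auto
    then have "Cl * \<eta>0 * TT powr (- ea) * (1 + X2) powr (ea - (2 - 1 / \<beta>)) \<le> Cl * \<eta>0 * TT powr (- ea) * (1 + TT - x) powr (ea - (2 - 1 / \<beta>))"
      using Cl_pos e0 by (intro mult_left_mono) auto
    with hl show "Cl * \<eta>0 * TT powr (- ea) * (1 + X2) powr (ea - (2 - 1 / \<beta>)) \<le> hh \<beta> x" by linarith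
  qed
  also have "\<dots> \<le> integral {0..TT} (hh \<beta>)" using Iu_sub[OF b X] .
  finally show ?thesis .
qed

lemma Iu_upper:
  assumes b: "1 < \<beta>"
  shows "integral {0..TT} (hh \<beta>) \<le> Au * \<eta>0 * TT powr (- ea) * (Gf (ea - (2 - 1 / \<beta>)) TT - Gf (ea - (2 - 1 / \<beta>)) 0)"
proof -
  have I: "((\<lambda>\<tau>. Au * \<eta>0 * TT powr (- ea) * (1 + TT - \<tau>) powr (ea - (2 - 1 / \<beta>))) has_integral
     Au * \<eta>0 * TT powr (- ea) * (Gf (ea - (2 - 1 / \<beta>)) TT - Gf (ea - (2 - 1 / \<beta>)) 0)) {0..TT}"
    using kint[of 0 TT TT "ea - (2 - 1 / \<beta>)"] TT_pos by (intro has_integral_mult_right) simp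
  show ?thesis
  proof (rule has_integral_le[OF _ I])
    show "(hh \<beta> has_integral integral {0..TT} (hh \<beta>)) {0..TT}"
      using h_int[OF b] by (simp add: integrable_integral)
    fix x assume "x \<in> {0..TT}"
    from h_upper[OF b this] show "hh \<beta> x \<le> Au * \<eta>0 * TT powr (- ea) * (1 + TT - x) powr (ea - (2 - 1 / \<beta>))" .
  qed
qed


lemma e1_eq: "ea - (2 - 1 / \<beta>) + 1 = 1 / \<beta> - 1 / (\<gamma> + 1)"
  using gpos by (simp add: ea_def field_simps)

lemma bL_TT: "2 \<le> TT \<Longrightarrow> 2 * bL \<le> bL * TT"
  using bL_pos by (simp add: mult.commute)

lemma caseA_D:
  assumes b: "1 < \<beta>" and g: "\<gamma> + 1 < \<beta>"
  shows "0 < Gf (ea - (2 - 1 / \<beta>)) (2 * bL) - Gf (ea - (2 - 1 / \<beta>)) bL"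
proof -
  define q where "q = ea - (2 - 1 / \<beta>) + 1"
  have q: "q < 0" unfolding q_def e1_eq using g gpos by (simp add: frac_less2)
  have ne: "ea - (2 - 1 / \<beta>) \<noteq> -1" using q unfolding q_def by auto
  have "(1 + 2 * bL) powr q < (1 + bL) powr q" using q bL_pos by (intro powr_less_mono2_neg) auto
  then have "0 < ((1 + 2 * bL) powr q - (1 + bL) powr q) / q" using q by (intro divide_neg_neg) auto
  then show ?thesis using ne unfolding Gf_def q_def by (simp add: diff_divide_distrib)
qed

lemma caseA:
  assumes b: "1 < \<beta>" and g: "\<gamma> + 1 < \<beta>" and T2: "2 \<le> TT"
  shows "Cl * (Gf (ea - (2 - 1 / \<beta>)) (2 * bL) - Gf (ea - (2 - 1 / \<beta>)) bL) * (\<eta>0 * TT powr (- ea)) \<le> integral {0..TT} (hh \<beta>)"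
    and "integral {0..TT} (hh \<beta>) \<le> Au / (- (ea - (2 - 1 / \<beta>) + 1)) * (\<eta>0 * TT powr (- ea))"
proof -
  show "Cl * (Gf (ea - (2 - 1 / \<beta>)) (2 * bL) - Gf (ea - (2 - 1 / \<beta>)) bL) * (\<eta>0 * TT powr (- ea)) \<le> integral {0..TT} (hh \<beta>)"
    using Iu_lower_G[OF b order_refl _ bL_TT[OF T2]] bL_pos by (simp add: mult_ac)
  define q where "q = ea - (2 - 1 / \<beta>) + 1"
  have q: "q < 0" unfolding q_def e1_eq using g gpos by (simp add: frac_less2)
  have ne: "ea - (2 - 1 / \<beta>) \<noteq> -1" using q unfolding q_def by auto
  have "Gf (ea - (2 - 1 / \<beta>)) TT - Gf (ea - (2 - 1 / \<beta>)) 0 = ((1 + TT) powr q - 1) / q"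
    using ne unfolding Gf_def q_def by (simp add: diff_divide_distrib)
  also have "\<dots> = (1 - (1 + TT) powr q) / (- q)" using q by (simp add: field_simps)
  also have "\<dots> \<le> 1 / (- q)"
    using q by (intro divide_right_mono) auto
  finally have G: "Gf (ea - (2 - 1 / \<beta>)) TT - Gf (ea - (2 - 1 / \<beta>)) 0 \<le> 1 / (- q)" .
  have "integral {0..TT} (hh \<beta>) \<le> Au * \<eta>0 * TT powr (- ea) * (Gf (ea - (2 - 1 / \<beta>)) TT - Gf (ea - (2 - 1 / \<beta>)) 0)"
    by (rule Iu_upper[OF b])
  also have "\<dots> \<le> Au * \<eta>0 * TT powr (- ea) * (1 / (- q))"
    using G Au_pos e0 by (intro mult_left_mono) auto
  finally show "integral {0..TT} (hh \<beta>) \<le> Au / (- (ea - (2 - 1 / \<beta>) + 1)) * (\<eta>0 * TT powr (- ea))"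
    by (simp add: q_def mult_ac)
qed

lemma ln_concave_aux:
  fixes b T :: real
  assumes "0 < b" "1 \<le> T"
  shows "b / (1 + b) * ln T \<le> ln (1 + b * T) - ln (1 + b)"
proof -
  define k where "k = b / (1 + b)"
  have k: "0 \<le> k" "k \<le> 1" using assms by (auto simp: k_def)
  have "(1 - k) * ln 1 + k * ln T \<le> ln ((1 - k) *\<^sub>R 1 + k *\<^sub>R T)"
    by (rule concave_onD[OF ln_concave]) (use k assms in auto)
  moreover have "(1 - k) *\<^sub>R 1 + k *\<^sub>R T = (1 + b * T) / (1 + b)"
    using assms by (simp add: k_def field_simps)
  moreover have "ln ((1 + b * T) / (1 + b)) = ln (1 + b * T) - ln (1 + b)"
  proof -
    have p1: "0 < 1 + b * T" using assms by (smt (verit) mult_pos_pos)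
    have p2: "0 < 1 + b" using assms by simp
    show ?thesis using p1 p2 by (simp add: ln_div)
  qed
  ultimately show ?thesis by (simp add: k_def)
qed

lemma caseB:
  assumes b: "1 < \<beta>" and g: "\<beta> = \<gamma> + 1" and T2: "2 \<le> TT"
  shows "Cl * (bL / (1 + bL)) * (\<eta>0 * TT powr (- ea) * ln TT) \<le> integral {0..TT} (hh \<beta>)"
    and "integral {0..TT} (hh \<beta>) \<le> (2 * Au) * (\<eta>0 * TT powr (- ea) * ln TT)"
proof -
  have em: "ea - (2 - 1 / \<beta>) = -1" using e1_eq[of \<beta>] g by simp
  have "bL \<le> bL * TT" using bL_TT[OF T2] bL_pos by simp
  from Iu_lower_G[OF b order_refl this order_refl]
  have L: "Cl * \<eta>0 * TT powr (- ea) * (ln (1 + bL * TT) - ln (1 + bL)) \<le> integral {0..TT} (hh \<beta>)"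
    by (simp add: Gf_def em)
  have "bL / (1 + bL) * ln TT \<le> ln (1 + bL * TT) - ln (1 + bL)"
    using bL_pos T2 by (intro ln_concave_aux) auto
  then have "Cl * \<eta>0 * TT powr (- ea) * (bL / (1 + bL) * ln TT) \<le> Cl * \<eta>0 * TT powr (- ea) * (ln (1 + bL * TT) - ln (1 + bL))"
    using Cl_pos e0 by (intro mult_left_mono) auto
  with L show "Cl * (bL / (1 + bL)) * (\<eta>0 * TT powr (- ea) * ln TT) \<le> integral {0..TT} (hh \<beta>)"
    by (simp add: mult_ac)
  have "2 * TT \<le> TT * TT" using mult_right_mono[OF T2, of TT] T2 by simp
  then have "1 + TT \<le> TT * TT" using T2 by linarith
  then have "ln (1 + TT) \<le> ln (TT * TT)"
    using T2 by simp
  also have "\<dots> = 2 * ln TT" using T2 by (simp add: ln_mult)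
  finally have G: "Gf (ea - (2 - 1 / \<beta>)) TT - Gf (ea - (2 - 1 / \<beta>)) 0 \<le> 2 * ln TT"
    by (simp add: Gf_def em)
  have "integral {0..TT} (hh \<beta>) \<le> Au * \<eta>0 * TT powr (- ea) * (Gf (ea - (2 - 1 / \<beta>)) TT - Gf (ea - (2 - 1 / \<beta>)) 0)"
    by (rule Iu_upper[OF b])
  also have "\<dots> \<le> Au * \<eta>0 * TT powr (- ea) * (2 * ln TT)"
    using G Au_pos e0 by (intro mult_left_mono) auto
  finally show "integral {0..TT} (hh \<beta>) \<le> (2 * Au) * (\<eta>0 * TT powr (- ea) * ln TT)"
    by (simp add: mult_ac)
qed

lemma caseC:
  assumes b: "1 < \<beta>" and g: "\<beta> < \<gamma> + 1" and T2: "2 \<le> TT"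
  shows "Cl * (bL / 2) * (\<eta>0 * TT powr (- (1 - 1 / \<beta>))) \<le> integral {0..TT} (hh \<beta>)"
    and "integral {0..TT} (hh \<beta>) \<le> (Au * 2 powr (ea - (2 - 1 / \<beta>) + 1) / (ea - (2 - 1 / \<beta>) + 1)) * (\<eta>0 * TT powr (- (1 - 1 / \<beta>)))"
proof -
  define e where "e = ea - (2 - 1 / \<beta>)"
  have q: "0 < e + 1" unfolding e_def e1_eq using g gpos b by (simp add: frac_less2)
  have en: "e < 0" using e_neg[OF b] by (simp add: e_def)
  have ne: "e \<noteq> -1" using q by auto
  have TTe: "TT powr (- ea) * TT powr (e + 1) = TT powr (- (1 - 1 / \<beta>))"
    using TT_pos by (simp add: powr_add[symmetric] e_def)
  have X: "bL \<le> bL * TT / 2" "bL * TT / 2 \<le> bL * TT" using bL_TT[OF T2] bL_pos TT_pos by auto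
  from Iu_lower_const[OF b X order_refl]
  have L: "Cl * \<eta>0 * TT powr (- ea) * ((1 + bL * TT) powr e * (bL * TT / 2)) \<le> integral {0..TT} (hh \<beta>)"
    by (simp add: e_def mult_ac)
  have "bL * TT \<le> (1 / 4) * TT" using bL_pos T2 by (intro mult_right_mono) auto
  then have "1 + bL * TT \<le> TT" using T2 by linarith
  then have "TT powr e \<le> (1 + bL * TT) powr e"
    using en bL_pos TT_pos by (intro powr_mono2') (auto intro: add_pos_nonneg)
  then have "TT powr e * (bL * TT / 2) \<le> (1 + bL * TT) powr e * (bL * TT / 2)"
    using bL_pos TT_pos by (intro mult_right_mono) auto
  then have ineq: "Cl * \<eta>0 * TT powr (- ea) * (TT powr e * (bL * TT / 2)) \<le> Cl * \<eta>0 * TT powr (- ea) * ((1 + bL * TT) powr e * (bL * TT / 2))"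
    using Cl_pos e0 by (intro mult_left_mono) auto
  have TT1: "TT powr e * TT = TT powr (e + 1)" using TT_pos by (simp add: powr_add)
  have "Cl * (bL / 2) * (\<eta>0 * TT powr (- (1 - 1 / \<beta>))) = Cl * \<eta>0 * TT powr (- ea) * (TT powr e * (bL * TT / 2))"
    unfolding TTe[symmetric] TT1[symmetric] by (simp add: mult_ac)
  also note ineq
  also note L
  finally show "Cl * (bL / 2) * (\<eta>0 * TT powr (- (1 - 1 / \<beta>))) \<le> integral {0..TT} (hh \<beta>)" .
  have "Gf e TT - Gf e 0 = ((1 + TT) powr (e + 1) - 1) / (e + 1)"
    using ne unfolding Gf_def by (simp add: diff_divide_distrib)
  also have "\<dots> \<le> (1 + TT) powr (e + 1) / (e + 1)" using q by (simp add: divide_right_mono)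
  also have "\<dots> \<le> (2 * TT) powr (e + 1) / (e + 1)"
    using q T2 by (intro divide_right_mono powr_mono2) auto
  also have "\<dots> = 2 powr (e + 1) * TT powr (e + 1) / (e + 1)" by (simp add: powr_mult)
  finally have G: "Gf e TT - Gf e 0 \<le> 2 powr (e + 1) * TT powr (e + 1) / (e + 1)" .
  have "integral {0..TT} (hh \<beta>) \<le> Au * \<eta>0 * TT powr (- ea) * (Gf e TT - Gf e 0)"
    using Iu_upper[OF b] by (simp add: e_def)
  also have "\<dots> \<le> Au * \<eta>0 * TT powr (- ea) * (2 powr (e + 1) * TT powr (e + 1) / (e + 1))"
    using G Au_pos e0 by (intro mult_left_mono) auto
  also have "\<dots> = (Au * 2 powr (e + 1) / (e + 1)) * (\<eta>0 * (TT powr (- ea) * TT powr (e + 1)))"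
    by (simp add: mult_ac)
  finally show "integral {0..TT} (hh \<beta>) \<le> (Au * 2 powr (ea - (2 - 1 / \<beta>) + 1) / (ea - (2 - 1 / \<beta>) + 1)) * (\<eta>0 * TT powr (- (1 - 1 / \<beta>)))"
    using TTe by (simp add: e_def)
qed

end

lemma combine:
  fixes T s I X cI CI :: real
  assumes T: "2 \<le> T" and s: "0 < s" and X: "0 \<le> X" and cI: "0 < cI" and CI: "0 < CI"
    and lo: "cI * X \<le> I" and up: "I \<le> CI * X"
  shows "min ((3/2) powr (-s)) cI * (T powr (-s) + X) \<le> (1 + T) powr (-s) + I \<and>
         (1 + T) powr (-s) + I \<le> max 1 CI * (T powr (-s) + X)"
proof
  have "(3/2 * T) powr (-s) \<le> (1 + T) powr (-s)"
    using T s by (intro powr_mono2') auto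
  moreover have "(3/2 * T) powr (-s) = (3/2) powr (-s) * T powr (-s)" by (rule powr_mult)
  ultimately have a: "(3/2) powr (-s) * T powr (-s) \<le> (1 + T) powr (-s)" by simp
  have "min ((3/2) powr (-s)) cI * T powr (-s) \<le> (3/2) powr (-s) * T powr (-s)"
    by (intro mult_right_mono) auto
  moreover have "min ((3/2) powr (-s)) cI * X \<le> cI * X"
    using X by (intro mult_right_mono) auto
  ultimately show "min ((3/2) powr (-s)) cI * (T powr (-s) + X) \<le> (1 + T) powr (-s) + I"
    using a lo by (simp add: distrib_left)
  have b: "(1 + T) powr (-s) \<le> T powr (-s)"
    using T s by (intro powr_mono2') auto
  have "T powr (-s) \<le> max 1 CI * T powr (-s)"
    by (intro mult_left_le_one_le[where y=1, simplified] mult_right_mono[of 1 "max 1 CI", simplified]) auto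
  moreover have "CI * X \<le> max 1 CI * X"
    using X by (intro mult_right_mono) auto
  ultimately show "(1 + T) powr (-s) + I \<le> max 1 CI * (T powr (-s) + X)"
    using b up by (simp add: distrib_left)
qed

theorem mainTheorem4:
  fixes s \<beta> \<gamma> \<delta> :: real and \<zeta> :: "real \<Rightarrow> real"
  assumes "s > 0" and "\<beta> > 1" and "\<gamma> > 0"
    and "lrs_profile \<zeta>" and "power_decay_tail \<zeta> \<gamma> \<delta>"
  shows "\<exists>c C. 0 < c \<and> 0 < C \<and>
    (\<forall>\<eta>0 (N::nat). 0 < \<eta>0 \<longrightarrow> 0 < N \<longrightarrow> lrs_T \<eta>0 \<zeta> N \<ge> 2 \<longrightarrow>
      (let T = lrs_T \<eta>0 \<zeta> N; \<alpha> = min \<beta> (\<gamma> + 1);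
           R = T powr (-s) + \<eta>0 * T powr (-(1 - 1 / \<alpha>)) * (if \<beta> = \<gamma> + 1 then ln T else 1)
       in c * R \<le> lrs_F s \<beta> \<eta>0 \<zeta> N \<and> lrs_F s \<beta> \<eta>0 \<zeta> N \<le> C * R))"
proof -
  obtain c1 c2 where c1: "0 < c1" and c2: "0 < c2" and d: "0 < \<delta>" "\<delta> < 1"
    and tl: "\<forall>x\<in>{\<delta>..1}. c1 * (1 - x) powr \<gamma> \<le> \<zeta> x \<and> \<zeta> x \<le> c2 * (1 - x) powr \<gamma>"
    using assms(5) unfolding power_decay_tail_def by auto
  have loc: "lrs \<zeta> \<gamma> \<delta> c1 c2 \<eta>0 N" if "0 < \<eta>0" "0 < N" for \<eta>0 N
    by unfold_locales (use assms c1 c2 d tl that in auto)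
  interpret L0: lrs \<zeta> \<gamma> \<delta> c1 c2 1 1 using loc by simp
  define Lg where "Lg = (\<lambda>T::real. if \<beta> = \<gamma> + 1 then ln T else 1)"
  define ex where "ex = -(1 - 1 / min \<beta> (\<gamma> + 1))"
  define II where "II = (\<lambda>\<eta>0 N. integral {0..lrs_T \<eta>0 \<zeta> N} (\<lambda>\<tau>. lrs_K \<beta> (lrs_T \<eta>0 \<zeta> N - \<tau>) * lrs_phi \<eta>0 \<zeta> N \<tau>))"
  have b: "1 < \<beta>" using assms by simp
  have key: "\<exists>cI CI. 0 < cI \<and> 0 < CI \<and> (\<forall>\<eta>0 N. 0 < \<eta>0 \<longrightarrow> 0 < N \<longrightarrow> 2 \<le> lrs_T \<eta>0 \<zeta> N \<longrightarrow>
      cI * (\<eta>0 * lrs_T \<eta>0 \<zeta> N powr ex * Lg (lrs_T \<eta>0 \<zeta> N)) \<le> II \<eta>0 N \<and>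
      II \<eta>0 N \<le> CI * (\<eta>0 * lrs_T \<eta>0 \<zeta> N powr ex * Lg (lrs_T \<eta>0 \<zeta> N)))"
  proof (cases rule: linorder_cases[of "\<gamma> + 1" \<beta>])
    case less
    have exe: "ex = - L0.ea" using less assms(3) by (simp add: ex_def L0.ea_def field_simps)
    have lg: "Lg T = 1" for T using less by (simp add: Lg_def)
    show ?thesis
    proof (intro exI conjI allI impI)
      show "0 < L0.Cl * (Gf (L0.ea - (2 - 1 / \<beta>)) (2 * L0.bL) - Gf (L0.ea - (2 - 1 / \<beta>)) L0.bL)"
        using L0.Cl_pos L0.caseA_D[OF b less] by simp
      show "0 < L0.Au / (- (L0.ea - (2 - 1 / \<beta>) + 1))"
        using L0.Au_pos less assms(3) by (simp add: L0.e1_eq frac_less2)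
      fix \<eta>0 N assume h: "0 < \<eta>0" "0 < N" "2 \<le> lrs_T \<eta>0 \<zeta> N"
      interpret L: lrs \<zeta> \<gamma> \<delta> c1 c2 \<eta>0 N using loc h by simp
      note A = L.caseA[OF b less h(3)]
      show "L0.Cl * (Gf (L0.ea - (2 - 1 / \<beta>)) (2 * L0.bL) - Gf (L0.ea - (2 - 1 / \<beta>)) L0.bL) * (\<eta>0 * lrs_T \<eta>0 \<zeta> N powr ex * Lg (lrs_T \<eta>0 \<zeta> N)) \<le> II \<eta>0 N"
        using A(1) by (simp add: II_def exe lg)
      show "II \<eta>0 N \<le> L0.Au / (- (L0.ea - (2 - 1 / \<beta>) + 1)) * (\<eta>0 * lrs_T \<eta>0 \<zeta> N powr ex * Lg (lrs_T \<eta>0 \<zeta> N))"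
        using A(2) by (simp add: II_def exe lg)
    qed
  next
    case equal
    have exe: "ex = - L0.ea" using equal assms(3) by (simp add: ex_def L0.ea_def field_simps)
    have lg: "Lg T = ln T" for T using equal by (simp add: Lg_def)
    show ?thesis
    proof (intro exI conjI allI impI)
      show "0 < L0.Cl * (L0.bL / (1 + L0.bL))"
        using L0.Cl_pos L0.bL_pos by simp
      show "0 < 2 * L0.Au" using L0.Au_pos by simp
      fix \<eta>0 N assume h: "0 < \<eta>0" "0 < N" "2 \<le> lrs_T \<eta>0 \<zeta> N"
      interpret L: lrs \<zeta> \<gamma> \<delta> c1 c2 \<eta>0 N using loc h by simp
      note A = L.caseB[OF b equal[symmetric] h(3)]
      show "L0.Cl * (L0.bL / (1 + L0.bL)) * (\<eta>0 * lrs_T \<eta>0 \<zeta> N powr ex * Lg (lrs_T \<eta>0 \<zeta> N)) \<le> II \<eta>0 N"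
        using A(1) by (simp add: II_def exe lg)
      show "II \<eta>0 N \<le> 2 * L0.Au * (\<eta>0 * lrs_T \<eta>0 \<zeta> N powr ex * Lg (lrs_T \<eta>0 \<zeta> N))"
        using A(2) by (simp add: II_def exe lg)
    qed
  next
    case greater
    have exe: "ex = - (1 - 1 / \<beta>)" using greater by (simp add: ex_def)
    have lg: "Lg T = 1" for T using greater by (simp add: Lg_def)
    show ?thesis
    proof (intro exI conjI allI impI)
      show "0 < L0.Cl * (L0.bL / 2)"
        using L0.Cl_pos L0.bL_pos by simp
      have q: "0 < L0.ea - (2 - 1 / \<beta>) + 1" unfolding L0.e1_eq using greater assms(3) b by (simp add: frac_less2)
      then show "0 < L0.Au * 2 powr (L0.ea - (2 - 1 / \<beta>) + 1) / (L0.ea - (2 - 1 / \<beta>) + 1)"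
        using L0.Au_pos by simp
      fix \<eta>0 N assume h: "0 < \<eta>0" "0 < N" "2 \<le> lrs_T \<eta>0 \<zeta> N"
      interpret L: lrs \<zeta> \<gamma> \<delta> c1 c2 \<eta>0 N using loc h by simp
      note A = L.caseC[OF b greater h(3)]
      show "L0.Cl * (L0.bL / 2) * (\<eta>0 * lrs_T \<eta>0 \<zeta> N powr ex * Lg (lrs_T \<eta>0 \<zeta> N)) \<le> II \<eta>0 N"
        using A(1) by (simp add: II_def exe lg)
      show "II \<eta>0 N \<le> L0.Au * 2 powr (L0.ea - (2 - 1 / \<beta>) + 1) / (L0.ea - (2 - 1 / \<beta>) + 1) * (\<eta>0 * lrs_T \<eta>0 \<zeta> N powr ex * Lg (lrs_T \<eta>0 \<zeta> N))"
        using A(2) by (simp add: II_def exe lg)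
    qed
  qed
  then obtain cI CI where cI: "0 < cI" and CI: "0 < CI" and KB: "\<And>\<eta>0 N. 0 < \<eta>0 \<Longrightarrow> 0 < N \<Longrightarrow> 2 \<le> lrs_T \<eta>0 \<zeta> N \<Longrightarrow>
      cI * (\<eta>0 * lrs_T \<eta>0 \<zeta> N powr ex * Lg (lrs_T \<eta>0 \<zeta> N)) \<le> II \<eta>0 N \<and>
      II \<eta>0 N \<le> CI * (\<eta>0 * lrs_T \<eta>0 \<zeta> N powr ex * Lg (lrs_T \<eta>0 \<zeta> N))"
    by blast
  show ?thesis
  proof (rule exI[of _ "min ((3/2) powr (-s)) cI"], rule exI[of _ "max 1 CI"], intro conjI allI impI)
    show "0 < min ((3/2) powr (-s)) cI" using cI by simp
    show "0 < max 1 CI" by simp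
    fix \<eta>0 N assume h: "0 < \<eta>0" "0 < N" "2 \<le> lrs_T \<eta>0 \<zeta> N"
    interpret L: lrs \<zeta> \<gamma> \<delta> c1 c2 \<eta>0 N using loc h by simp
    have F: "lrs_F s \<beta> \<eta>0 \<zeta> N = (1 + lrs_T \<eta>0 \<zeta> N) powr (-s) + II \<eta>0 N"
      using L.F_eq[OF b] by (simp add: II_def)
    have X0: "0 \<le> \<eta>0 * lrs_T \<eta>0 \<zeta> N powr ex * Lg (lrs_T \<eta>0 \<zeta> N)"
      using h by (simp add: Lg_def)
    note KB' = KB[OF h]
    note C = combine[OF h(3) assms(1) X0 cI CI KB'[THEN conjunct1] KB'[THEN conjunct2]]
    show "let T = lrs_T \<eta>0 \<zeta> N; \<alpha> = min \<beta> (\<gamma> + 1);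
           R = T powr (-s) + \<eta>0 * T powr (-(1 - 1 / \<alpha>)) * (if \<beta> = \<gamma> + 1 then ln T else 1)
       in min ((3/2) powr (-s)) cI * R \<le> lrs_F s \<beta> \<eta>0 \<zeta> N \<and> lrs_F s \<beta> \<eta>0 \<zeta> N \<le> max 1 CI * R"
      unfolding Let_def F using C by (simp add: ex_def Lg_def)
  qed
qed

end
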